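(* Let $\mathcal{X}$ be a set and let $k:\mathcal{X}\times\mathcal{X}\to\mathbb{R}_{\ge 0}$ be a symmetric positive semidefinite function (i.e. for every finite subset $\{x_1,\dots,x_m\}\subseteq\mathcal{X}$ the matrix $(k(x_i,x_j))_{i,j}$ is positive semidefinite) whose image $\{k(x,y):x,y\in\mathcal{X}\}$ has exactly two elements. Then $k$ is a strong kernel.
   Context: A strong kernel on a set $\mathcal{X}$ is a symmetric function $k:\mathcal{X}\times\mathcal{X}\to\mathbb{R}_{\ge 0}$ such that $k(x,y)\ge\min\{k(x,z),k(z,y)\}$ for all $x,y,z\in\mathcal{X}$. *)

theory Defs
  imports Complex_Main
begin

definition nonneg_sym_kernel :: "'a set \<Rightarrow> ('a \<Rightarrow> 'a \<Rightarrow> real) \<Rightarrow> bool" where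
  "nonneg_sym_kernel X k \<longleftrightarrow>
     (\<forall>x\<in>X. \<forall>y\<in>X. k x y \<ge> 0 \<and> k x y = k y x)"

definition psd_kernel :: "'a set \<Rightarrow> ('a \<Rightarrow> 'a \<Rightarrow> real) \<Rightarrow> bool" where
  "psd_kernel X k \<longleftrightarrow>
     (\<forall>S c. finite S \<longrightarrow> S \<subseteq> X \<longrightarrow>
        (\<Sum>x\<in>S. \<Sum>y\<in>S. c x * c y * k x y) \<ge> 0)"

definition strong_kernel :: "'a set \<Rightarrow> ('a \<Rightarrow> 'a \<Rightarrow> real) \<Rightarrow> bool" where
  "strong_kernel X k \<longleftrightarrow> nonneg_sym_kernel X k \<and>
     (\<forall>x\<in>X. \<forall>y\<in>X. \<forall>z\<in>X. k x y \<ge> min (k x z) (k z y))"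

end

theory Submission
  imports Defs
begin

theorem mainTheorem5:
  fixes X :: "'a set" and k :: "'a \<Rightarrow> 'a \<Rightarrow> real"
  assumes "nonneg_sym_kernel X k"
    and "psd_kernel X k"
    and "card {k x y | x y. x \<in> X \<and> y \<in> X} = 2"
  shows "strong_kernel X k"
proof -
  have sym: "\<And>x y. x \<in> X \<Longrightarrow> y \<in> X \<Longrightarrow> k x y = k y x"
    using assms(1) unfolding nonneg_sym_kernel_def by blast
  obtain a b where ab: "{k x y | x y. x \<in> X \<and> y \<in> X} = {a, b}" "a < b"
  proof -
    obtain u v where uv: "{k x y | x y. x \<in> X \<and> y \<in> X} = {u, v}" "u \<noteq> v"
      using assms(3) by (auto simp: card_2_iff)
    show ?thesis
    proof (cases "u < v")
      case True thus ?thesis using that[of u v] uv by blast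
    next
      case False
      then have "v < u" using uv(2) by linarith
      moreover have "{k x y | x y. x \<in> X \<and> y \<in> X} = {v, u}" using uv(1) by blast
      ultimately show ?thesis using that[of v u] by blast
    qed
  qed
  have vals: "\<And>x y. x \<in> X \<Longrightarrow> y \<in> X \<Longrightarrow> k x y = a \<or> k x y = b"
  proof -
    fix x y assume "x \<in> X" "y \<in> X"
    then have "k x y \<in> {k x y | x y. x \<in> X \<and> y \<in> X}" by blast
    then show "k x y = a \<or> k x y = b" unfolding ab(1) by simp
  qed
  have le: "\<And>x y. x \<in> X \<Longrightarrow> y \<in> X \<Longrightarrow> k x y \<le> b"
    using vals ab(2) by (metis order.strict_implies_order order_refl)
  have psd: "\<And>S c. finite S \<Longrightarrow> S \<subseteq> X \<Longrightarrow> (\<Sum>x\<in>S. \<Sum>y\<in>S. c x * c y * k x y) \<ge> 0"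
    using assms(2) unfolding psd_kernel_def by blast
  have "k x y \<ge> min (k x z) (k z y)" if xX: "x \<in> X" and yX: "y \<in> X" and zX: "z \<in> X" for x y z
  proof (rule ccontr)
    assume "\<not> ?thesis"
    then have h: "k x y < k x z" "k x y < k z y" by (simp_all add: min_def split: if_splits)
    have kxz: "k x z = b" and kzy: "k z y = b" and kxy: "k x y = a"
      using h vals[OF xX zX] vals[OF zX yX] vals[OF xX yX] ab(2) by auto
    have zx: "z \<noteq> x" using h by auto
    have zy: "z \<noteq> y" using h by auto
    show False
    proof (cases "x = y")
      case True
      define c where "c = (\<lambda>u. if u = x then (1::real) else -1)"
      have "(\<Sum>u\<in>{x,z}. \<Sum>v\<in>{x,z}. c u * c v * k u v) \<ge> 0"
        by (rule psd) (use xX zX in auto)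
      moreover have "(\<Sum>u\<in>{x,z}. \<Sum>v\<in>{x,z}. c u * c v * k u v)
          = k x x - k x z - k z x + k z z"
        using zx by (simp add: c_def sum.insert)
      moreover have "k z x = b" using sym[OF zX xX] kxz by simp
      moreover have "k x x = a" using kxy True by simp
      moreover have "k z z \<le> b" using le zX by blast
      ultimately show False using ab(2) kxz by linarith
    next
      case False
      define c where "c = (\<lambda>u. if u = z then (-2::real) else 1)"
      have "(\<Sum>u\<in>{x,y,z}. \<Sum>v\<in>{x,y,z}. c u * c v * k u v) \<ge> 0"
        by (rule psd) (use xX yX zX in auto)
      moreover have "(\<Sum>u\<in>{x,y,z}. \<Sum>v\<in>{x,y,z}. c u * c v * k u v)
          = k x x + k x y - 2 * k x z + k y x + k y y - 2 * k y z
            - 2 * k z x - 2 * k z y + 4 * k z z"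
        using zx zy False by (simp add: c_def sum.insert)
      moreover have "k z x = b" using sym[OF zX xX] kxz by simp
      moreover have "k y z = b" using sym[OF yX zX] kzy by simp
      moreover have "k y x = a" using sym[OF yX xX] kxy by simp
      moreover have "k z z \<le> b" "k x x \<le> b" "k y y \<le> b" using le xX yX zX by auto
      ultimately show False using ab(2) kxz kzy kxy by linarith
    qed
  qed
  then show ?thesis unfolding strong_kernel_def using assms(1) by blast
qed

end
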